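(* Let $k\ge 1$ be the cache size. Considering all request sequences, with no restriction on which pages may follow which (equivalently, the complete access graph), \[ \mathcal{I}[\mathrm{FIFO},\mathrm{LRU}]=\left[-1+\frac{1}{k},\ \frac{1}{2}-\frac{1}{4k-2}\right]. \]
   Context: Paging: a cache holds at most $k$ pages and is initially empty. A request sequence is a finite sequence of pages. A request to a page in the cache is a hit; otherwise it is a fault, the page is brought into the cache, and if the cache is full some page is evicted first. $\mathcal{A}(I)$ denotes the number of faults of algorithm $\mathcal{A}$ on $I$. LRU evicts the cached page whose most recent request is earliest. FIFO evicts the cached page that entered the cache earliest. Relative interval: for algorithms $\mathcal{A},\mathcal{B}$ and a set of allowed sequences (here all sequences), let $\mathrm{Min}_{\mathcal{A},\mathcal{B}}(n)=\min_{|I|=n}\{\mathcal{A}(I)-\mathcal{B}(I)\}$ and $\mathrm{Max}_{\mathcal{A},\mathcal{B}}(n)=\max_{|I|=n}\{\mathcal{A}(I)-\mathcal{B}(I)\}$, the min/max being over allowed sequences of length $n$; $\mathrm{Min}(\mathcal{A},\mathcal{B})=\liminf_{n\to\infty}\mathrm{Min}_{\mathcal{A},\mathcal{B}}(n)/n$, $\mathrm{Max}(\mathcal{A},\mathcal{B})=\limsup_{n\to\infty}\mathrm{Max}_{\mathcal{A},\mathcal{B}}(n)/n$, and $\mathcal{I}[\mathcal{A},\mathcal{B}]=[\mathrm{Min}(\mathcal{A},\mathcal{B}),\mathrm{Max}(\mathcal{A},\mathcal{B})]$. *)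

theory Defs
  imports "HOL-Library.Extended_Real"
begin

type_synonym page = nat

text \<open>LRU: the cache is a list ordered by recency of last request (most recent first).\<close>
fun lru_faults :: "nat \<Rightarrow> page list \<Rightarrow> page list \<Rightarrow> nat" where
  "lru_faults k c [] = 0"
| "lru_faults k c (p # ps) =
     (if p \<in> set c then lru_faults k (p # removeAll p c) ps
      else Suc (lru_faults k (p # take (k - 1) c) ps))"

text \<open>FIFO: the cache is a list ordered by time of entry (newest first).\<close>
fun fifo_faults :: "nat \<Rightarrow> page list \<Rightarrow> page list \<Rightarrow> nat" where
  "fifo_faults k c [] = 0"
| "fifo_faults k c (p # ps) =
     (if p \<in> set c then fifo_faults k c ps
      else Suc (fifo_faults k (p # take (k - 1) c) ps))"

definition LRU :: "nat \<Rightarrow> page list \<Rightarrow> nat" where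
  "LRU k I = lru_faults k [] I"

definition FIFO :: "nat \<Rightarrow> page list \<Rightarrow> nat" where
  "FIFO k I = fifo_faults k [] I"

definition MinAB :: "(page list \<Rightarrow> nat) \<Rightarrow> (page list \<Rightarrow> nat) \<Rightarrow> nat \<Rightarrow> int" where
  "MinAB A B n = Min {int (A I) - int (B I) | I. length I = n}"

definition MaxAB :: "(page list \<Rightarrow> nat) \<Rightarrow> (page list \<Rightarrow> nat) \<Rightarrow> nat \<Rightarrow> int" where
  "MaxAB A B n = Max {int (A I) - int (B I) | I. length I = n}"

definition MinRel :: "(page list \<Rightarrow> nat) \<Rightarrow> (page list \<Rightarrow> nat) \<Rightarrow> ereal" where
  "MinRel A B = liminf (\<lambda>n. ereal (real_of_int (MinAB A B n) / real n))"

definition MaxRel :: "(page list \<Rightarrow> nat) \<Rightarrow> (page list \<Rightarrow> nat) \<Rightarrow> ereal" where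
  "MaxRel A B = limsup (\<lambda>n. ereal (real_of_int (MaxAB A B n) / real n))"

definition rel_interval :: "(page list \<Rightarrow> nat) \<Rightarrow> (page list \<Rightarrow> nat) \<Rightarrow> ereal \<times> ereal" where
  "rel_interval A B = (MinRel A B, MaxRel A B)"

end

theory Submission
  imports Defs
begin

definition fF :: "nat \<Rightarrow> page list \<Rightarrow> page \<Rightarrow> page list" where
  "fF k F p = (if p \<in> set F then F else p # take (k - 1) F)"
definition fL :: "nat \<Rightarrow> page list \<Rightarrow> page \<Rightarrow> page list" where
  "fL k L p = (if p \<in> set L then p # removeAll p L else p # take (k - 1) L)"

lemma fifo_Cons: "fifo_faults k F (p#ps) = (if p \<in> set F then 0 else 1) + fifo_faults k (fF k F p) ps"
  by (simp add: fF_def)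
lemma lru_Cons: "lru_faults k L (p#ps) = (if p \<in> set L then 0 else 1) + lru_faults k (fL k L p) ps"
  by (simp add: fL_def)

lemma fifo_le: "fifo_faults k F ps \<le> length ps"
  by (induction ps arbitrary: F) (auto intro: le_SucI)
lemma lru_le: "lru_faults k L ps \<le> length ps"
  by (induction ps arbitrary: L) (auto intro: le_SucI)

definition cinv :: "nat \<Rightarrow> page list \<Rightarrow> page list \<Rightarrow> bool" where
  "cinv k F L \<longleftrightarrow> distinct F \<and> distinct L \<and> length F = length L \<and> length L \<le> k
     \<and> (length L < k \<longrightarrow> set F = set L)"

lemma length_removeAll_distinct:
  "distinct L \<Longrightarrow> p \<in> set L \<Longrightarrow> length (removeAll p L) = length L - 1"
  by (metis distinct_remove1_removeAll length_remove1)

lemma inv_step: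
  assumes k: "1 \<le> k" and I: "cinv k F L"
  shows "cinv k (fF k F p) (fL k L p)"
proof (cases "length L < k")
  case True
  with I have eq: "set F = set L" and d: "distinct F" "distinct L" "length F = length L"
    by (auto simp: cinv_def)
  have tF: "take (k-1) F = F" and tL: "take (k-1) L = L" using True d by auto
  have "p \<in> set L \<Longrightarrow> length L = Suc (length L - Suc 0)"
    by (cases L) auto
  then show ?thesis using True eq d tF tL
    by (auto simp: cinv_def fF_def fL_def length_removeAll_distinct distinct_removeAll length_pos_if_in_set)
next
  case False
  with I have d: "distinct F" "distinct L" "length F = k" "length L = k"
    by (auto simp: cinv_def)
  have "distinct (fF k F p)" "length (fF k F p) = k"
    using d k by (auto simp: fF_def dest: in_set_takeD)
  moreover have "distinct (fL k L p)" "length (fL k L p) = k"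
    using d k by (auto simp: fL_def length_removeAll_distinct distinct_removeAll dest: in_set_takeD)
  ultimately show ?thesis by (simp add: cinv_def)
qed

lemma inv_full_diff:
  assumes "cinv k F L" "p \<in> set L" "p \<notin> set F"
  shows "length F = k" "length L = k" "\<exists>y\<in>set F. y \<notin> set L"
proof -
  from assms show lk: "length L = k" and "length F = k" by (auto simp: cinv_def)
  show "\<exists>y\<in>set F. y \<notin> set L"
  proof (rule ccontr)
    assume "\<not> ?thesis"
    hence sub: "set F \<subseteq> set L" by auto
    have "card (set F) = card (set L)" using assms(1) by (simp add: cinv_def distinct_card)
    hence "set F = set L" using sub by (simp add: card_subset_eq)
    with assms show False by auto
  qed
qed

lemma inv_full_diff2:
  assumes "cinv k F L" "p \<in> set F" "p \<notin> set L"
  shows "length F = k" "length L = k" "\<exists>y\<in>set L. y \<notin> set F"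
proof -
  from assms show lk: "length L = k" and "length F = k" by (auto simp: cinv_def)
  show "\<exists>y\<in>set L. y \<notin> set F"
  proof (rule ccontr)
    assume "\<not> ?thesis"
    hence sub: "set L \<subseteq> set F" by auto
    have "card (set F) = card (set L)" using assms(1) by (simp add: cinv_def distinct_card)
    hence "set L = set F" using sub by (simp add: card_subset_eq)
    with assms show False by auto
  qed
qed

fun rr :: "page set \<Rightarrow> page list \<Rightarrow> nat" where
  "rr A [] = 0"
| "rr A (x # xs) = (if x \<in> A then rr A xs else Suc (length xs))"

lemma rr_le: "rr A xs \<le> length xs"
  by (induction xs) auto

lemma rr_butlast: "\<exists>y\<in>set xs. y \<notin> A \<Longrightarrow> rr A (butlast xs) + 1 \<le> rr A xs"
proof (induction xs)
  case Nil then show ?case by simp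
next
  case (Cons x xs)
  show ?case
  proof (cases "x \<in> A")
    case True
    with Cons.prems have "\<exists>y\<in>set xs. y \<notin> A" by auto
    moreover hence "xs \<noteq> []" by auto
    ultimately show ?thesis using Cons.IH True by simp
  next
    case False
    then show ?thesis by (cases xs) (auto simp: rr_le)
  qed
qed

lemma rr_removeAll: "x \<in> A \<Longrightarrow> rr A (removeAll x xs) \<le> rr A xs"
  by (induction xs) auto

lemma rr_eq_set: "set xs \<subseteq> A \<Longrightarrow> rr A xs = 0"
  by (induction xs) auto


fun idx :: "page list \<Rightarrow> page \<Rightarrow> nat" where
  "idx [] x = 0"
| "idx (y # ys) x = (if y = x then 0 else Suc (idx ys x))"

fun recs :: "(page \<Rightarrow> nat) \<Rightarrow> page set \<Rightarrow> nat \<Rightarrow> page list \<Rightarrow> nat" where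
  "recs key A m [] = 0"
| "recs key A m (x # xs) = (if x \<in> A then (if m \<le> key x then Suc (recs key A (Suc (key x)) xs)
      else recs key A m xs) else 0)"

lemma recs_le: "recs key A m xs \<le> length xs"
  by (induction xs arbitrary: m) (auto intro: le_SucI)

lemma recs_zero: "\<forall>z\<in>set xs. z \<in> A \<longrightarrow> key z < m \<Longrightarrow> recs key A m xs = 0"
  by (induction xs) auto

lemma recs_butlast: "\<exists>y\<in>set xs. y \<notin> A \<Longrightarrow> recs key A m (butlast xs) = recs key A m xs"
proof (induction xs arbitrary: m)
  case Nil then show ?case by simp
next
  case (Cons x xs)
  show ?case
  proof (cases "x \<in> A")
    case True
    with Cons.prems have "\<exists>y\<in>set xs. y \<notin> A" by auto
    moreover hence "xs \<noteq> []" by auto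
    ultimately show ?thesis using Cons.IH True by simp
  next
    case False
    then show ?thesis by (cases xs) auto
  qed
qed

lemma recs_transfer:
  assumes "\<forall>y\<in>set xs. y \<in> A \<longrightarrow> y \<in> A'"
    and "\<forall>y\<in>set xs. y \<in> A \<longrightarrow> m \<le> key y \<longrightarrow> m' \<le> key' y"
    and "\<forall>y\<in>set xs. \<forall>z\<in>set xs. y \<in> A \<longrightarrow> z \<in> A \<longrightarrow> key y < key z \<longrightarrow> key' y < key' z"
  shows "recs key A m xs \<le> recs key' A' m' xs"
  using assms
proof (induction xs arbitrary: m m')
  case Nil then show ?case by simp
next
  case (Cons x xs)
  show ?case
  proof (cases "x \<in> A")
    case False then show ?thesis by simp
  next
    case xA: True
    hence xA': "x \<in> A'" using Cons.prems by auto
    show ?thesis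
    proof (cases "m \<le> key x")
      case True
      hence m': "m' \<le> key' x" using Cons.prems xA by auto
      have "recs key A (Suc (key x)) xs \<le> recs key' A' (Suc (key' x)) xs"
        apply (rule Cons.IH) using Cons.prems xA by auto
      then show ?thesis using xA xA' True m' by simp
    next
      case False
      show ?thesis
      proof (cases "m' \<le> key' x")
        case True
        have "recs key A m xs \<le> recs key' A' (Suc (key' x)) xs"
          apply (rule Cons.IH) using Cons.prems xA False by auto
        then show ?thesis using xA xA' True False by simp
      next
        case F2: False
        have "recs key A m xs \<le> recs key' A' m' xs"
          apply (rule Cons.IH) using Cons.prems xA False by auto
        then show ?thesis using xA xA' F2 False by simp
      qed
    qed
  qed
qed


lemma recs_badmin_S:
  assumes "distinct xs" "set xs \<subseteq> S" "b \<in> A'"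
    and min: "\<And>z. z \<in> S \<Longrightarrow> z \<in> A' \<Longrightarrow> z \<noteq> b \<Longrightarrow> key' b < key' z"
    and sub: "\<And>y. y \<in> S \<Longrightarrow> y \<in> A \<Longrightarrow> y \<noteq> b \<Longrightarrow> y \<in> A'"
    and ord: "\<And>y z. y \<in> S \<Longrightarrow> z \<in> S \<Longrightarrow> y \<in> A \<Longrightarrow> z \<in> A \<Longrightarrow> y \<noteq> b \<Longrightarrow> z \<noteq> b \<Longrightarrow> key y < key z \<Longrightarrow> key' y < key' z"
    and thr: "\<forall>y\<in>set xs. y \<in> A \<longrightarrow> y \<noteq> b \<longrightarrow> m \<le> key y \<longrightarrow> m' \<le> key' y"
  shows "recs key A m xs \<le> Suc (recs key' A' m' xs)"
  using assms(1,2) thr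
proof (induction xs arbitrary: m m')
  case Nil then show ?case by simp
next
  case (Cons x xs)
  have xS: "x \<in> S" and xsS: "set xs \<subseteq> S" and dxs: "distinct xs" using Cons.prems by auto
  show ?case
  proof (cases "x = b")
    case xb: True
    have bxs: "b \<notin> set xs" using Cons.prems xb by auto
    have T: "recs key A m1 xs \<le> recs key' A' m1' xs"
      if "\<forall>y\<in>set xs. y \<in> A \<longrightarrow> m1 \<le> key y \<longrightarrow> m1' \<le> key' y" for m1 m1'
    proof (rule recs_transfer)
      show "\<forall>y\<in>set xs. y \<in> A \<longrightarrow> y \<in> A'" using sub xsS bxs by blast
      show "\<forall>y\<in>set xs. \<forall>z\<in>set xs. y \<in> A \<longrightarrow> z \<in> A \<longrightarrow> key y < key z \<longrightarrow> key' y < key' z"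
        using ord xsS bxs by blast
    qed (rule that)
    have minb: "\<forall>y\<in>set xs. y \<in> A \<longrightarrow> key' b < key' y"
      using min sub xsS bxs by blast
    have thr': "\<forall>y\<in>set xs. y \<in> A \<longrightarrow> m \<le> key y \<longrightarrow> m' \<le> key' y"
      using Cons.prems(3) bxs by auto
    show ?thesis
    proof (cases "b \<in> A \<and> m \<le> key b")
      case True
      show ?thesis
      proof (cases "m' \<le> key' b")
        case True
        have "recs key A (Suc (key b)) xs \<le> recs key' A' (Suc (key' b)) xs"
          apply (rule T) using minb by auto
        then show ?thesis using xb \<open>b \<in> A \<and> m \<le> key b\<close> True \<open>b \<in> A'\<close> by simp
      next
        case False
        have "recs key A (Suc (key b)) xs \<le> recs key' A' m' xs"
          apply (rule T) using thr' \<open>b \<in> A \<and> m \<le> key b\<close> by auto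
        then show ?thesis using xb \<open>b \<in> A \<and> m \<le> key b\<close> False \<open>b \<in> A'\<close> by simp
      qed
    next
      case nr: False
      have old: "recs key A m (x # xs) = (if b \<in> A then recs key A m xs else 0)"
        using nr xb by auto
      show ?thesis
      proof (cases "m' \<le> key' b")
        case True
        have "recs key A m xs \<le> recs key' A' (Suc (key' b)) xs"
          apply (rule T) using minb by auto
        then show ?thesis using xb old True \<open>b \<in> A'\<close> by simp
      next
        case False
        have "recs key A m xs \<le> recs key' A' m' xs"
          by (rule T) (rule thr')
        then show ?thesis using xb old False \<open>b \<in> A'\<close> by simp
      qed
    qed
  next
    case xnb: False
    show ?thesis
    proof (cases "x \<in> A")
      case False then show ?thesis by simp
    next
      case xA: True
      hence xA': "x \<in> A'" using sub xS xnb by auto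
      have ordx: "\<forall>y\<in>set xs. y \<in> A \<longrightarrow> y \<noteq> b \<longrightarrow> key x < key y \<longrightarrow> key' x < key' y"
        using ord xS xsS xA xnb by blast
      have thr': "\<forall>y\<in>set xs. y \<in> A \<longrightarrow> y \<noteq> b \<longrightarrow> m \<le> key y \<longrightarrow> m' \<le> key' y"
        using Cons.prems(3) by auto
      show ?thesis
      proof (cases "m \<le> key x")
        case True
        hence m': "m' \<le> key' x" using Cons.prems(3) xA xnb by auto
        have "recs key A (Suc (key x)) xs \<le> Suc (recs key' A' (Suc (key' x)) xs)"
          apply (rule Cons.IH[OF dxs xsS]) using ordx by auto
        then show ?thesis using xA xA' True m' by simp
      next
        case False
        show ?thesis
        proof (cases "m' \<le> key' x")
          case True
          have "recs key A m xs \<le> Suc (recs key' A' (Suc (key' x)) xs)"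
            apply (rule Cons.IH[OF dxs xsS]) using ordx False by auto
          then show ?thesis using xA xA' True False by simp
        next
          case F2: False
          have "recs key A m xs \<le> Suc (recs key' A' m' xs)"
            by (rule Cons.IH[OF dxs xsS thr'])
          then show ?thesis using xA xA' F2 False by simp
        qed
      qed
    qed
  qed
qed

lemma recs_badmin:
  assumes "distinct xs" "b \<in> A'"
    and "\<forall>z\<in>set xs. z \<in> A' \<longrightarrow> z \<noteq> b \<longrightarrow> key' b < key' z"
    and "\<forall>y\<in>set xs. y \<in> A \<longrightarrow> y \<noteq> b \<longrightarrow> y \<in> A'"
    and "\<forall>y\<in>set xs. y \<in> A \<longrightarrow> y \<noteq> b \<longrightarrow> m \<le> key y \<longrightarrow> m' \<le> key' y"
    and "\<forall>y\<in>set xs. \<forall>z\<in>set xs. y \<in> A \<longrightarrow> z \<in> A \<longrightarrow> y \<noteq> b \<longrightarrow> z \<noteq> b \<longrightarrow> key y < key z \<longrightarrow> key' y < key' z"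
  shows "recs key A m xs \<le> Suc (recs key' A' m' xs)"
  by (rule recs_badmin_S[where S = "set xs"]) (use assms in auto)

lemma recs_badmax_S:
  assumes "set xs \<subseteq> S"
    and mx: "\<And>z. z \<in> S \<Longrightarrow> z \<in> A \<Longrightarrow> key z \<le> key b"
    and sub: "\<And>y. y \<in> S \<Longrightarrow> y \<in> A \<Longrightarrow> y \<noteq> b \<Longrightarrow> y \<in> A'"
    and ord: "\<And>y z. y \<in> S \<Longrightarrow> z \<in> S \<Longrightarrow> y \<in> A \<Longrightarrow> z \<in> A \<Longrightarrow> y \<noteq> b \<Longrightarrow> z \<noteq> b \<Longrightarrow> key y < key z \<Longrightarrow> key' y < key' z"
    and thr: "\<forall>y\<in>set xs. y \<in> A \<longrightarrow> y \<noteq> b \<longrightarrow> m \<le> key y \<longrightarrow> m' \<le> key' y"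
  shows "recs key A m xs \<le> Suc (recs key' A' m' xs)"
  using assms(1) thr
proof (induction xs arbitrary: m m')
  case Nil then show ?case by simp
next
  case (Cons x xs)
  have xS: "x \<in> S" and xsS: "set xs \<subseteq> S" using Cons.prems by auto
  show ?case
  proof (cases "x = b")
    case xb: True
    have z: "recs key A m1 xs = 0" if "key b < m1" for m1
    proof (rule recs_zero)
      show "\<forall>z\<in>set xs. z \<in> A \<longrightarrow> key z < m1" using mx xsS that by fastforce
    qed
    have "recs key A m (x # xs) \<le> 1"
      using xb z[of "Suc (key b)"] z[of m] by auto
    then show ?thesis by simp
  next
    case xnb: False
    show ?thesis
    proof (cases "x \<in> A")
      case False then show ?thesis by simp
    next
      case xA: True
      hence xA': "x \<in> A'" using sub xS xnb by auto
      have ordx: "\<forall>y\<in>set xs. y \<in> A \<longrightarrow> y \<noteq> b \<longrightarrow> key x < key y \<longrightarrow> key' x < key' y"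
        using ord xS xsS xA xnb by blast
      have thr': "\<forall>y\<in>set xs. y \<in> A \<longrightarrow> y \<noteq> b \<longrightarrow> m \<le> key y \<longrightarrow> m' \<le> key' y"
        using Cons.prems(2) by auto
      show ?thesis
      proof (cases "m \<le> key x")
        case True
        hence m': "m' \<le> key' x" using Cons.prems(2) xA xnb by auto
        have "recs key A (Suc (key x)) xs \<le> Suc (recs key' A' (Suc (key' x)) xs)"
          apply (rule Cons.IH[OF xsS]) using ordx by auto
        then show ?thesis using xA xA' True m' by simp
      next
        case False
        show ?thesis
        proof (cases "m' \<le> key' x")
          case True
          have "recs key A m xs \<le> Suc (recs key' A' (Suc (key' x)) xs)"
            apply (rule Cons.IH[OF xsS]) using ordx False by auto
          then show ?thesis using xA xA' True False by simp
        next
          case F2: False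
          have "recs key A m xs \<le> Suc (recs key' A' m' xs)"
            by (rule Cons.IH[OF xsS thr'])
          then show ?thesis using xA xA' F2 False by simp
        qed
      qed
    qed
  qed
qed

lemma recs_badmax:
  assumes "\<forall>z\<in>set xs. z \<in> A \<longrightarrow> key z \<le> key b"
    and "\<forall>y\<in>set xs. y \<in> A \<longrightarrow> y \<noteq> b \<longrightarrow> y \<in> A'"
    and "\<forall>y\<in>set xs. y \<in> A \<longrightarrow> y \<noteq> b \<longrightarrow> m \<le> key y \<longrightarrow> m' \<le> key' y"
    and "\<forall>y\<in>set xs. \<forall>z\<in>set xs. y \<in> A \<longrightarrow> z \<in> A \<longrightarrow> y \<noteq> b \<longrightarrow> z \<noteq> b \<longrightarrow> key y < key z \<longrightarrow> key' y < key' z"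
  shows "recs key A m xs \<le> Suc (recs key' A' m' xs)"
  by (rule recs_badmax_S[where S = "set xs"]) (use assms in auto)

lemma idx_less: "z \<in> set L \<Longrightarrow> idx L z < length L"
  by (induction L) auto

lemma idx_last: "distinct L \<Longrightarrow> L \<noteq> [] \<Longrightarrow> idx L (last L) = length L - 1"
proof (induction L)
  case Nil then show ?case by simp
next
  case (Cons a L)
  show ?case
  proof (cases "L = []")
    case True then show ?thesis by simp
  next
    case False
    hence "last (a # L) = last L" "last L \<in> set L" by auto
    with Cons show ?thesis by (cases L) auto
  qed
qed

lemma idx_last_max: "distinct L \<Longrightarrow> z \<in> set L \<Longrightarrow> idx L z \<le> idx L (last L)"
  using idx_less[of z L] idx_last[of L] by (cases "L = []") auto

lemma idx_append: "y \<in> set xs \<Longrightarrow> idx (xs @ ys) y = idx xs y"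
  by (induction xs) auto

lemma idx_removeAll_mono:
  "distinct L \<Longrightarrow> y \<in> set L \<Longrightarrow> z \<in> set L \<Longrightarrow> y \<noteq> p \<Longrightarrow> z \<noteq> p \<Longrightarrow>
   idx L y < idx L z \<Longrightarrow> idx (removeAll p L) y < idx (removeAll p L) z"
proof (induction L)
  case Nil then show ?case by simp
next
  case (Cons a L)
  show ?case
  proof (cases "a = p")
    case True
    with Cons show ?thesis by (auto split: if_splits)
  next
    case False
    with Cons show ?thesis by (auto split: if_splits)
  qed
qed

lemma in_set_butlast_ne_last:
  "distinct L \<Longrightarrow> y \<in> set L \<Longrightarrow> y \<noteq> last L \<Longrightarrow> y \<in> set (butlast L)"
proof -
  assume a: "y \<in> set L" "y \<noteq> last L"
  hence "L \<noteq> []" by auto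
  hence "L = butlast L @ [last L]" by simp
  hence "set L = set (butlast L) \<union> {last L}" by (metis set_append list.set(1) list.set(2))
  with a show ?thesis by auto
qed

definition Psi :: "page list \<Rightarrow> page list \<Rightarrow> int" where
  "Psi F L = int (length L) - int (recs (idx L) (set L) 0 F)"

lemma take_k1: "length F = k \<Longrightarrow> take (k - Suc 0) F = butlast F"
  by (simp add: butlast_conv_take)

lemma psi_A1:
  assumes I: "cinv k F L" and pF: "p \<notin> set F" and pL: "p \<in> set L"
  shows "Psi (fF k F p) (fL k L p) + 1 \<le> Psi F L"
proof -
  note full = inv_full_diff[OF I pL pF]
  have dL: "distinct L" and dF: "distinct F" using I by (auto simp: cinv_def)
  define L' where "L' = p # removeAll p L"
  have F': "fF k F p = p # butlast F" using full pF by (simp add: fF_def take_k1)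
  have L'e: "fL k L p = L'" using pL by (simp add: fL_def L'_def)
  have sL': "set L' = set L" using pL by (auto simp: L'_def)
  have lL': "length L' = length L" using pL dL length_pos_if_in_set[OF pL]
    by (simp add: L'_def length_removeAll_distinct)
  have r1: "recs (idx L') (set L) 0 (p # butlast F) = Suc (recs (idx L') (set L) 1 (butlast F))"
    using pL by (simp add: L'_def)
  have r2: "recs (idx L) (set L) 0 (butlast F) = recs (idx L) (set L) 0 F"
    using recs_butlast full(3) by blast
  have r3: "recs (idx L) (set L) 0 (butlast F) \<le> recs (idx L') (set L) 1 (butlast F)"
  proof (rule recs_transfer)
    show "\<forall>y\<in>set (butlast F). y \<in> set L \<longrightarrow> 0 \<le> idx L y \<longrightarrow> 1 \<le> idx L' y"
      using pF by (auto simp: L'_def dest: in_set_butlastD)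
    show "\<forall>y\<in>set (butlast F). \<forall>z\<in>set (butlast F). y \<in> set L \<longrightarrow> z \<in> set L \<longrightarrow>
        idx L y < idx L z \<longrightarrow> idx L' y < idx L' z"
      using pF dL by (auto simp: L'_def dest!: in_set_butlastD intro: idx_removeAll_mono)
  qed simp
  show ?thesis unfolding Psi_def F' L'e sL' lL' using r1 r2 r3 by simp
qed

lemma psi_hit:
  assumes I: "cinv k F L" and pF: "p \<in> set F" and pL: "p \<in> set L"
  shows "Psi (fF k F p) (fL k L p) \<le> Psi F L + 1"
proof -
  have dL: "distinct L" and dF: "distinct F" using I by (auto simp: cinv_def)
  define L' where "L' = p # removeAll p L"
  have F': "fF k F p = F" using pF by (simp add: fF_def)
  have L'e: "fL k L p = L'" using pL by (simp add: fL_def L'_def)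
  have sL': "set L' = set L" using pL by (auto simp: L'_def)
  have lL': "length L' = length L" using pL dL length_pos_if_in_set[OF pL]
    by (simp add: L'_def length_removeAll_distinct)
  have "recs (idx L) (set L) 0 F \<le> Suc (recs (idx L') (set L) 0 F)"
  proof (rule recs_badmin[where b = p])
    show "\<forall>y\<in>set F. \<forall>z\<in>set F. y \<in> set L \<longrightarrow> z \<in> set L \<longrightarrow> y \<noteq> p \<longrightarrow> z \<noteq> p \<longrightarrow>
        idx L y < idx L z \<longrightarrow> idx L' y < idx L' z"
      using dL by (auto simp: L'_def intro: idx_removeAll_mono)
  qed (use dF pL in \<open>auto simp: L'_def\<close>)
  then show ?thesis unfolding Psi_def F' L'e sL' lL' by simp
qed

lemma psi_A:
  assumes I: "cinv k F L" and pF: "p \<in> set F" and pL: "p \<notin> set L"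
  shows "Psi (fF k F p) (fL k L p) \<le> Psi F L + 1"
proof -
  note full = inv_full_diff2[OF I pF pL]
  have dL: "distinct L" and dF: "distinct F" using I by (auto simp: cinv_def)
  have Lne: "L \<noteq> []" using full(3) by auto
  define L' where "L' = p # butlast L"
  have F': "fF k F p = F" using pF by (simp add: fF_def)
  have L'e: "fL k L p = L'" using pL full by (simp add: fL_def L'_def take_k1)
  have lL': "length L' = length L" using Lne by (simp add: L'_def)
  have "recs (idx L) (set L) 0 F \<le> Suc (recs (idx L') (set L') 0 F)"
  proof (rule recs_badmax[where b = "last L"])
    show "\<forall>z\<in>set F. z \<in> set L \<longrightarrow> idx L z \<le> idx L (last L)"
      using dL idx_last_max by blast
    show "\<forall>y\<in>set F. y \<in> set L \<longrightarrow> y \<noteq> last L \<longrightarrow> y \<in> set L'"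
    proof (intro ballI impI)
      fix y assume "y \<in> set L" "y \<noteq> last L"
      hence "y \<in> set (butlast L)" by (rule in_set_butlast_ne_last[OF dL])
      thus "y \<in> set L'" by (simp add: L'_def)
    qed
    have e: "idx L' y = Suc (idx L y)" if "y \<in> set L" "y \<noteq> last L" for y
    proof -
      have yb: "y \<in> set (butlast L)" by (rule in_set_butlast_ne_last[OF dL that])
      have ib: "idx L y = idx (butlast L) y"
        using idx_append[OF yb, of "[last L]"] unfolding append_butlast_last_id[OF Lne] .
      have yp: "y \<noteq> p" using that(1) pL by blast
      show ?thesis unfolding L'_def using yp ib by simp
    qed
    show "\<forall>y\<in>set F. y \<in> set L \<longrightarrow> y \<noteq> last L \<longrightarrow> 0 \<le> idx L y \<longrightarrow> 0 \<le> idx L' y"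
      by simp
    show "\<forall>y\<in>set F. \<forall>z\<in>set F. y \<in> set L \<longrightarrow> z \<in> set L \<longrightarrow> y \<noteq> last L \<longrightarrow> z \<noteq> last L \<longrightarrow>
        idx L y < idx L z \<longrightarrow> idx L' y < idx L' z"
    proof (intro ballI impI)
      fix y z assume "y \<in> set L" "z \<in> set L" "y \<noteq> last L" "z \<noteq> last L" "idx L y < idx L z"
      thus "idx L' y < idx L' z" using e[of y] e[of z] by simp
    qed
  qed
  then show ?thesis unfolding Psi_def F' L'e lL' by simp
qed

lemma psi_fault:
  assumes k: "1 \<le> k" and I: "cinv k F L" and pF: "p \<notin> set F" and pL: "p \<notin> set L"
  shows "Psi (fF k F p) (fL k L p) \<le> Psi F L"
proof (cases "length L < k")
  case True
  with I have eq: "set F = set L" and d: "distinct F" "distinct L" "length F = length L"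
    by (auto simp: cinv_def)
  have tF: "take (k-1) F = F" and tL: "take (k-1) L = L" using True d by auto
  have F': "fF k F p = p # F" using pF tF by (simp add: fF_def)
  have L': "fL k L p = p # L" using pL tL by (simp add: fL_def)
  have "recs (idx L) (set L) 0 F \<le> recs (idx (p # L)) (set (p # L)) 1 F"
    apply (rule recs_transfer) using pL eq by auto
  moreover have "recs (idx (p # L)) (set (p # L)) 0 (p # F) = Suc (recs (idx (p # L)) (set (p # L)) 1 F)"
    by simp
  ultimately show ?thesis unfolding Psi_def F' L' by simp
next
  case False
  with I have dF: "distinct F" and dL: "distinct L" and lF: "length F = k" and lL: "length L = k"
    by (auto simp: cinv_def)
  have Lne: "L \<noteq> []" using lL k by auto
  define L' where "L' = p # butlast L"
  have F': "fF k F p = p # butlast F" using pF lF by (simp add: fF_def take_k1)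
  have L'e: "fL k L p = L'" using pL lL by (simp add: fL_def L'_def take_k1)
  have lL': "length L' = length L" using Lne by (simp add: L'_def)
  have ex: "\<exists>y\<in>set F. y \<notin> set L'"
  proof (rule ccontr)
    assume "\<not> ?thesis"
    hence sub: "set F \<subseteq> set L'" by auto
    have "distinct L'" using dL pL by (auto simp: L'_def distinct_butlast dest: in_set_butlastD)
    hence "card (set L') = k" using lL' lL by (simp add: distinct_card)
    moreover have "card (set F) = k" using dF lF by (simp add: distinct_card)
    ultimately have "set F = set L'" using sub by (simp add: card_subset_eq)
    thus False using pF by (auto simp: L'_def)
  qed
  have r1: "recs (idx L') (set L') 0 (p # butlast F) = Suc (recs (idx L') (set L') 1 (butlast F))"
    by (simp add: L'_def)
  have r2: "recs (idx L') (set L') 1 (butlast F) = recs (idx L') (set L') 1 F"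
    using recs_butlast ex by blast
  have "recs (idx L) (set L) 0 F \<le> Suc (recs (idx L') (set L') 1 F)"
  proof (rule recs_badmax[where b = "last L"])
    show "\<forall>z\<in>set F. z \<in> set L \<longrightarrow> idx L z \<le> idx L (last L)"
      using dL idx_last_max by blast
    show "\<forall>y\<in>set F. y \<in> set L \<longrightarrow> y \<noteq> last L \<longrightarrow> y \<in> set L'"
    proof (intro ballI impI)
      fix y assume "y \<in> set L" "y \<noteq> last L"
      hence "y \<in> set (butlast L)" by (rule in_set_butlast_ne_last[OF dL])
      thus "y \<in> set L'" by (simp add: L'_def)
    qed
    have e: "idx L' y = Suc (idx L y)" if "y \<in> set L" "y \<noteq> last L" for y
    proof -
      have yb: "y \<in> set (butlast L)" by (rule in_set_butlast_ne_last[OF dL that])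
      have ib: "idx L y = idx (butlast L) y"
        using idx_append[OF yb, of "[last L]"] unfolding append_butlast_last_id[OF Lne] .
      have yp: "y \<noteq> p" using that(1) pL by blast
      show ?thesis unfolding L'_def using yp ib by simp
    qed
    show "\<forall>y\<in>set F. y \<in> set L \<longrightarrow> y \<noteq> last L \<longrightarrow> 0 \<le> idx L y \<longrightarrow> 1 \<le> idx L' y"
    proof (intro ballI impI)
      fix y assume "y \<in> set L" "y \<noteq> last L"
      thus "1 \<le> idx L' y" using e[of y] by simp
    qed
    show "\<forall>y\<in>set F. \<forall>z\<in>set F. y \<in> set L \<longrightarrow> z \<in> set L \<longrightarrow> y \<noteq> last L \<longrightarrow> z \<noteq> last L \<longrightarrow>
        idx L y < idx L z \<longrightarrow> idx L' y < idx L' z"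
    proof (intro ballI impI)
      fix y z assume "y \<in> set L" "z \<in> set L" "y \<noteq> last L" "z \<noteq> last L" "idx L y < idx L z"
      thus "idx L' y < idx L' z" using e[of y] e[of z] by simp
    qed
  qed
  then show ?thesis unfolding Psi_def F' L'e lL' using r1 r2 by simp
qed

definition Phi_up :: "nat \<Rightarrow> page list \<Rightarrow> page list \<Rightarrow> int" where
  "Phi_up k F L = int (rr (set L) F) + (int k - 1) * Psi F L"

definition Theta :: "page list \<Rightarrow> page list \<Rightarrow> int" where
  "Theta F L = int (rr (set F) L)"

lemma psi_nonneg: "cinv k F L \<Longrightarrow> 0 \<le> Psi F L"
  using recs_le[of "idx L" "set L" 0 F] by (simp add: Psi_def cinv_def)

lemma phi_nonneg: "1 \<le> k \<Longrightarrow> cinv k F L \<Longrightarrow> 0 \<le> Phi_up k F L"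
  using psi_nonneg[of k F L] by (simp add: Phi_up_def)

lemma inv_len: "cinv k F L \<Longrightarrow> length F \<le> k \<and> length L \<le> k"
  by (simp add: cinv_def)

lemma step_up:
  assumes k: "1 \<le> k" and I: "cinv k F L"
  shows "(2 * int k - 1) * (int (if p \<in> set F then 0 else 1) - int (if p \<in> set L then 0 else 1))
           - (int k - 1) + Phi_up k (fF k F p) (fL k L p) \<le> Phi_up k F L"
proof -
  have dF: "distinct F" and dL: "distinct L" using I by (auto simp: cinv_def)
  have I': "cinv k (fF k F p) (fL k L p)" using inv_step[OF k I] .
  have k1: "0 \<le> int k - 1" using k by simp
  have Rle: "rr (set (fL k L p)) (fF k F p) \<le> k"
    using rr_le[of "set (fL k L p)" "fF k F p"] inv_len[OF I'] by simp
  have R0: "0 \<le> int (rr (set L) F)" by simp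
  show ?thesis
  proof (cases "p \<in> set F")
    case pF: True
    show ?thesis
    proof (cases "p \<in> set L")
      case pL: True
      have hP: "Psi (fF k F p) (fL k L p) \<le> Psi F L + 1" by (rule psi_hit[OF I pF pL])
      have "set (fL k L p) = set L" using pL by (auto simp: fL_def)
      moreover have "fF k F p = F" using pF by (simp add: fF_def)
      ultimately have hR: "rr (set (fL k L p)) (fF k F p) = rr (set L) F" by simp
      have "(int k - 1) * Psi (fF k F p) (fL k L p) \<le> (int k - 1) * (Psi F L + 1)"
        using mult_left_mono[OF hP k1] .
      moreover have "(int k - 1) * (Psi F L + 1) = (int k - 1) * Psi F L + (int k - 1)"
        by (simp add: algebra_simps)
      moreover have "(2 * int k - 1) * (int (if p \<in> set F then 0 else 1) - int (if p \<in> set L then 0 else 1)) = 0"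
        using pF pL by simp
      ultimately show ?thesis using hR unfolding Phi_up_def by linarith
    next
      case pL: False
      have hP: "Psi (fF k F p) (fL k L p) \<le> Psi F L + 1" by (rule psi_A[OF I pF pL])
      have "(int k - 1) * Psi (fF k F p) (fL k L p) \<le> (int k - 1) * (Psi F L + 1)"
        using mult_left_mono[OF hP k1] .
      moreover have "(int k - 1) * (Psi F L + 1) = (int k - 1) * Psi F L + (int k - 1)"
        by (simp add: algebra_simps)
      moreover have "(2 * int k - 1) * (int (if p \<in> set F then 0 else 1) - int (if p \<in> set L then 0 else 1)) = - (2 * int k - 1)"
        using pF pL by simp
      moreover have "int (rr (set (fL k L p)) (fF k F p)) \<le> int k" using Rle by simp
      ultimately show ?thesis using R0 k unfolding Phi_up_def by linarith
    qed
  next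
    case pF: False
    show ?thesis
    proof (cases "p \<in> set L")
      case pL: True
      note full = inv_full_diff[OF I pL pF]
      have hP: "Psi (fF k F p) (fL k L p) + 1 \<le> Psi F L" by (rule psi_A1[OF I pF pL])
      have sL: "set (fL k L p) = set L" using pL by (auto simp: fL_def)
      have F': "fF k F p = p # butlast F" using pF full by (simp add: fF_def take_k1)
      have "rr (set L) (p # butlast F) + 1 \<le> rr (set L) F"
        using rr_butlast[OF full(3)] pL by simp
      hence hR: "rr (set (fL k L p)) (fF k F p) + 1 \<le> rr (set L) F" using sL F' by simp
      have "(int k - 1) * (Psi (fF k F p) (fL k L p) + 1) \<le> (int k - 1) * Psi F L"
        using mult_left_mono[OF hP k1] .
      moreover have "(int k - 1) * (Psi (fF k F p) (fL k L p) + 1) = (int k - 1) * Psi (fF k F p) (fL k L p) + (int k - 1)"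
        by (simp add: algebra_simps)
      moreover have "(2 * int k - 1) * (int (if p \<in> set F then 0 else 1) - int (if p \<in> set L then 0 else 1)) = 2 * int k - 1"
        using pF pL by simp
      ultimately show ?thesis using hR unfolding Phi_up_def by linarith
    next
      case pL: False
      have hP: "Psi (fF k F p) (fL k L p) \<le> Psi F L" by (rule psi_fault[OF k I pF pL])
      have "p \<in> set (fL k L p)" using pL by (simp add: fL_def)
      moreover have "fF k F p = p # take (k - 1) F" using pF by (simp add: fF_def)
      ultimately have "rr (set (fL k L p)) (fF k F p) = rr (set (fL k L p)) (take (k - 1) F)" by simp
      also have "\<dots> \<le> length (take (k - 1) F)" by (rule rr_le)
      also have "\<dots> \<le> k - 1" by simp
      finally have hR: "int (rr (set (fL k L p)) (fF k F p)) \<le> int k - 1" using k by simp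
      have "(int k - 1) * Psi (fF k F p) (fL k L p) \<le> (int k - 1) * Psi F L"
        using mult_left_mono[OF hP k1] .
      moreover have "(2 * int k - 1) * (int (if p \<in> set F then 0 else 1) - int (if p \<in> set L then 0 else 1)) = 0"
        using pF pL by simp
      ultimately show ?thesis using hR R0 unfolding Phi_up_def by linarith
    qed
  qed
qed

lemma step_lo:
  assumes k: "1 \<le> k" and I: "cinv k F L"
  shows "int k * (int (if p \<in> set L then 0 else 1) - int (if p \<in> set F then 0 else 1))
           - (int k - 1) + Theta (fF k F p) (fL k L p) \<le> Theta F L"
proof -
  have I': "cinv k (fF k F p) (fL k L p)" using inv_step[OF k I] .
  have Tle: "rr (set (fF k F p)) (fL k L p) \<le> k"
    using rr_le[of "set (fF k F p)" "fL k L p"] inv_len[OF I'] by simp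
  show ?thesis
  proof (cases "p \<in> set F")
    case pF: True
    have sF: "fF k F p = F" using pF by (simp add: fF_def)
    show ?thesis
    proof (cases "p \<in> set L")
      case pL: True
      have "rr (set F) (p # removeAll p L) \<le> rr (set F) L"
        using rr_removeAll[OF pF, of L] pF by simp
      then show ?thesis using pF pL sF k by (simp add: Theta_def fL_def)
    next
      case pL: False
      note full = inv_full_diff2[OF I pF pL]
      have L': "fL k L p = p # butlast L" using pL full by (simp add: fL_def take_k1)
      have "rr (set F) (p # butlast L) + 1 \<le> rr (set F) L"
        using rr_butlast[OF full(3)] pF by simp
      then show ?thesis using pF pL sF L' by (simp add: Theta_def)
    qed
  next
    case pF: False
    show ?thesis
    proof (cases "p \<in> set L")
      case pL: True
      have "int (rr (set (fF k F p)) (fL k L p)) \<le> int k" using Tle by simp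
      then show ?thesis using pF pL k by (simp add: Theta_def)
    next
      case pL: False
      have "p \<in> set (fF k F p)" using pF by (simp add: fF_def)
      moreover have "fL k L p = p # take (k - 1) L" using pL by (simp add: fL_def)
      ultimately have "rr (set (fF k F p)) (fL k L p) = rr (set (fF k F p)) (take (k - 1) L)" by simp
      also have "\<dots> \<le> length (take (k - 1) L)" by (rule rr_le)
      also have "\<dots> \<le> k - 1" by simp
      finally have "int (rr (set (fF k F p)) (fL k L p)) \<le> int k - 1" using k by simp
      then show ?thesis using pF pL by (simp add: Theta_def)
    qed
  qed
qed

lemma upper_run:
  assumes k: "1 \<le> k"
  shows "cinv k F L \<Longrightarrow> (2 * int k - 1) * (int (fifo_faults k F ps) - int (lru_faults k L ps))
           \<le> (int k - 1) * int (length ps) + Phi_up k F L"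
proof (induction ps arbitrary: F L)
  case Nil then show ?case using phi_nonneg[OF k Nil] by simp
next
  case (Cons p ps)
  define f where "f = int (if p \<in> set F then 0 else 1)"
  define l where "l = int (if p \<in> set L then 0 else 1)"
  define a where "a = int (fifo_faults k (fF k F p) ps)"
  define b where "b = int (lru_faults k (fL k L p) ps)"
  have IH: "(2 * int k - 1) * (a - b) \<le> (int k - 1) * int (length ps) + Phi_up k (fF k F p) (fL k L p)"
    unfolding a_def b_def by (rule Cons.IH[OF inv_step[OF k Cons.prems]])
  have st: "(2 * int k - 1) * (f - l) - (int k - 1) + Phi_up k (fF k F p) (fL k L p) \<le> Phi_up k F L"
    unfolding f_def l_def by (rule step_up[OF k Cons.prems])
  have e1: "int (fifo_faults k F (p # ps)) = f + a" unfolding fifo_Cons f_def a_def by simp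
  have e2: "int (lru_faults k L (p # ps)) = l + b" unfolding lru_Cons l_def b_def by simp
  have "(2 * int k - 1) * ((f + a) - (l + b)) = (2 * int k - 1) * (f - l) + (2 * int k - 1) * (a - b)"
    by (simp add: algebra_simps)
  moreover have "(int k - 1) * int (length (p # ps)) = (int k - 1) * int (length ps) + (int k - 1)"
    by (simp add: algebra_simps)
  ultimately show ?case unfolding e1 e2 using IH st by linarith
qed

lemma lower_run:
  assumes k: "1 \<le> k"
  shows "cinv k F L \<Longrightarrow> int k * (int (lru_faults k L ps) - int (fifo_faults k F ps))
           \<le> (int k - 1) * int (length ps) + Theta F L"
proof (induction ps arbitrary: F L)
  case Nil then show ?case by (simp add: Theta_def)
next
  case (Cons p ps)
  define f where "f = int (if p \<in> set F then 0 else 1)"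
  define l where "l = int (if p \<in> set L then 0 else 1)"
  define a where "a = int (fifo_faults k (fF k F p) ps)"
  define b where "b = int (lru_faults k (fL k L p) ps)"
  have IH: "int k * (b - a) \<le> (int k - 1) * int (length ps) + Theta (fF k F p) (fL k L p)"
    unfolding a_def b_def by (rule Cons.IH[OF inv_step[OF k Cons.prems]])
  have st: "int k * (l - f) - (int k - 1) + Theta (fF k F p) (fL k L p) \<le> Theta F L"
    unfolding f_def l_def by (rule step_lo[OF k Cons.prems])
  have e1: "int (fifo_faults k F (p # ps)) = f + a" unfolding fifo_Cons f_def a_def by simp
  have e2: "int (lru_faults k L (p # ps)) = l + b" unfolding lru_Cons l_def b_def by simp
  have "int k * ((l + b) - (f + a)) = int k * (l - f) + int k * (b - a)"
    by (simp add: algebra_simps)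
  moreover have "(int k - 1) * int (length (p # ps)) = (int k - 1) * int (length ps) + (int k - 1)"
    by (simp add: algebra_simps)
  ultimately show ?case unfolding e1 e2 using IH st by linarith
qed

lemma inv_empty: "1 \<le> k \<Longrightarrow> cinv k [] []"
  by (simp add: cinv_def)

lemma upper_bound:
  assumes k: "1 \<le> k"
  shows "(2 * int k - 1) * (int (FIFO k I) - int (LRU k I)) \<le> (int k - 1) * int (length I)"
  using upper_run[OF k inv_empty[OF k], of I] by (simp add: FIFO_def LRU_def Phi_up_def Psi_def)

lemma lower_bound:
  assumes k: "1 \<le> k"
  shows "int k * (int (LRU k I) - int (FIFO k I)) \<le> (int k - 1) * int (length I)"
  using lower_run[OF k inv_empty[OF k], of I] by (simp add: FIFO_def LRU_def Theta_def)

fun runF :: "nat \<Rightarrow> page list \<Rightarrow> page list \<Rightarrow> page list" where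
  "runF k F [] = F"
| "runF k F (p # ps) = runF k (fF k F p) ps"

fun runL :: "nat \<Rightarrow> page list \<Rightarrow> page list \<Rightarrow> page list" where
  "runL k L [] = L"
| "runL k L (p # ps) = runL k (fL k L p) ps"

lemma fifo_append: "fifo_faults k F (xs @ ys) = fifo_faults k F xs + fifo_faults k (runF k F xs) ys"
  by (induction xs arbitrary: F) (simp_all add: fF_def)

lemma lru_append: "lru_faults k L (xs @ ys) = lru_faults k L xs + lru_faults k (runL k L xs) ys"
  by (induction xs arbitrary: L) (simp_all add: fL_def)

lemma runF_append: "runF k F (xs @ ys) = runF k (runF k F xs) ys"
  by (induction xs arbitrary: F) simp_all

lemma runL_append: "runL k L (xs @ ys) = runL k (runL k L xs) ys"
  by (induction xs arbitrary: L) simp_all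

lemma fifo_single: "fifo_faults k F [p] = (if p \<in> set F then 0 else 1)"
  by simp

lemma lru_single: "lru_faults k L [p] = (if p \<in> set L then 0 else 1)"
  by simp

lemma runF_single: "runF k F [p] = fF k F p" by simp
lemma runL_single: "runL k L [p] = fL k L p" by simp

lemma fifo_hits: "set ps \<subseteq> set F \<Longrightarrow> fifo_faults k F ps = 0 \<and> runF k F ps = F"
  by (induction ps) (auto simp: fF_def)

lemma removeAll_upt_hd: "i < j \<Longrightarrow> removeAll i [i..<j] = [Suc i..<j]"
  by (simp add: upt_conv_Cons)

lemma ins_step:
  assumes "k = d + e + 2"
  shows "(c + e + 1) \<notin> set ([c + e + 2..<c + k + 1] @ [c..<c + e + 1])"
    and "(c + e + 1) # take (k - 1) ([c + e + 2..<c + k + 1] @ [c..<c + e + 1])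
           = [c + e + 1..<c + k + 1] @ [c..<c + e]"
proof -
  show "(c + e + 1) \<notin> set ([c + e + 2..<c + k + 1] @ [c..<c + e + 1])" by simp
  define A where "A = [c + e + 2..<c + k + 1]"
  have l: "length A = d + 1" unfolding A_def length_upt using assms by arith
  have "take (k - 1) (A @ [c..<c + e + 1]) = A @ take e [c..<c + e + 1]"
    using assms l by (simp add: take_append)
  hence "take (k - 1) ([c + e + 2..<c + k + 1] @ [c..<c + e + 1]) = [c + e + 2..<c + k + 1] @ take e [c..<c + e + 1]"
    by (simp add: A_def)
  also have "take e [c..<c + e + 1] = [c..<c + e]" by (simp add: take_upt)
  finally show "(c + e + 1) # take (k - 1) ([c + e + 2..<c + k + 1] @ [c..<c + e + 1])
           = [c + e + 1..<c + k + 1] @ [c..<c + e]"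
    using assms by (simp add: upt_conv_Cons)
qed

lemma warm_max:
  assumes "d + e = k"
  shows "runF k [] (rev [e..<k]) = [e..<k] \<and> runL k [] (rev [e..<k]) = [e..<k]
       \<and> fifo_faults k [] (rev [e..<k]) = d \<and> lru_faults k [] (rev [e..<k]) = d"
  using assms
proof (induction d arbitrary: e)
  case 0 then show ?case by simp
next
  case (Suc d)
  have ek: "e < k" using Suc.prems by simp
  have IH: "runF k [] (rev [Suc e..<k]) = [Suc e..<k] \<and> runL k [] (rev [Suc e..<k]) = [Suc e..<k]
       \<and> fifo_faults k [] (rev [Suc e..<k]) = d \<and> lru_faults k [] (rev [Suc e..<k]) = d"
    using Suc.IH[of "Suc e"] Suc.prems by simp
  have r: "rev [e..<k] = rev [Suc e..<k] @ [e]" using ek by (simp add: upt_conv_Cons)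
  have t: "take (k - 1) [Suc e..<k] = [Suc e..<k]" by simp
  have c: "e # [Suc e..<k] = [e..<k]" using ek by (simp add: upt_conv_Cons)
  show ?case unfolding r fifo_append lru_append runF_append runL_append
    using IH t c by (simp add: fF_def fL_def)
qed

lemma cyc_H:
  assumes "d + e + 1 = k"
  shows "runF k [c..<c + k] [c + 1..<c + 1 + d] = [c..<c + k]
       \<and> runL k [c..<c + k] [c + 1..<c + 1 + d] = rev [c..<c + d + 1] @ [c + d + 1..<c + k]
       \<and> fifo_faults k [c..<c + k] [c + 1..<c + 1 + d] = 0
       \<and> lru_faults k [c..<c + k] [c + 1..<c + 1 + d] = 0"
  using assms
proof (induction d arbitrary: e)
  case 0 then show ?case by (simp add: upt_conv_Cons)
next
  case (Suc d)
  have IH: "runF k [c..<c + k] [c + 1..<c + 1 + d] = [c..<c + k]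
       \<and> runL k [c..<c + k] [c + 1..<c + 1 + d] = rev [c..<c + d + 1] @ [c + d + 1..<c + k]
       \<and> fifo_faults k [c..<c + k] [c + 1..<c + 1 + d] = 0
       \<and> lru_faults k [c..<c + k] [c + 1..<c + 1 + d] = 0"
    using Suc.IH[of "Suc e"] Suc.prems by simp
  have lt: "c + d + 1 < c + k" using Suc.prems by simp
  have r: "[c + 1..<c + 1 + Suc d] = [c + 1..<c + 1 + d] @ [c + d + 1]" by simp
  have inF: "c + d + 1 \<in> set [c..<c + k]" using lt by simp
  have inL: "c + d + 1 \<in> set (rev [c..<c + d + 1] @ [c + d + 1..<c + k])" using lt by simp
  have rm: "removeAll (c + d + 1) (rev [c..<c + d + 1] @ [c + d + 1..<c + k])
            = rev [c..<c + d + 1] @ [c + d + 2..<c + k]"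
    using lt by (simp add: removeAll_upt_hd)
  have e2: "(c + d + 1) # (rev [c..<c + d + 1] @ [c + d + 2..<c + k]) = rev [c..<c + Suc d + 1] @ [c + Suc d + 1..<c + k]"
    by simp
  show ?case unfolding r fifo_append lru_append runF_append runL_append
    using IH inF inL rm e2 by (simp add: fF_def fL_def)
qed

lemma cyc_S3:
  assumes "d + e + 1 = k"
  shows "runF k ((c + k) # [c..<c + k - 1]) (rev [c + e + 1..<c + k]) = [c + e + 1..<c + k + 1] @ [c..<c + e]
       \<and> runL k ((c + k) # rev [c + 1..<c + k]) (rev [c + e + 1..<c + k]) = [c + e + 1..<c + k + 1] @ rev [c + 1..<c + e + 1]
       \<and> fifo_faults k ((c + k) # [c..<c + k - 1]) (rev [c + e + 1..<c + k]) = d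
       \<and> lru_faults k ((c + k) # rev [c + 1..<c + k]) (rev [c + e + 1..<c + k]) = 0"
  using assms
proof (induction d arbitrary: e)
  case 0
  hence e: "e = k - 1" "k \<ge> 1" by auto
  have "[c + k..<c + k + 1] = [c + k]" by simp
  then show ?case using e by simp
next
  case (Suc d)
  let ?F0 = "(c + k) # [c..<c + k - 1]" and ?L0 = "(c + k) # rev [c + 1..<c + k]"
  have kk: "k = d + e + 2" using Suc.prems by simp
  have IH: "runF k ?F0 (rev [c + e + 2..<c + k]) = [c + e + 2..<c + k + 1] @ [c..<c + e + 1]
       \<and> runL k ?L0 (rev [c + e + 2..<c + k]) = [c + e + 2..<c + k + 1] @ rev [c + 1..<c + e + 2]
       \<and> fifo_faults k ?F0 (rev [c + e + 2..<c + k]) = d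
       \<and> lru_faults k ?L0 (rev [c + e + 2..<c + k]) = 0"
    using Suc.IH[of "Suc e"] Suc.prems by (simp add: add.assoc)
  have lt: "c + e + 1 < c + k" using kk by simp
  have r: "rev [c + e + 1..<c + k] = rev [c + e + 2..<c + k] @ [c + e + 1]"
    using lt by (simp add: upt_conv_Cons)
  note ins = ins_step[OF kk, of c]
  have inL: "c + e + 1 \<in> set ([c + e + 2..<c + k + 1] @ rev [c + 1..<c + e + 2])" by simp
  have rv: "rev [c + 1..<c + e + 2] = (c + e + 1) # rev [c + 1..<c + e + 1]" by simp
  have rm: "removeAll (c + e + 1) ([c + e + 2..<c + k + 1] @ rev [c + 1..<c + e + 2])
        = [c + e + 2..<c + k + 1] @ rev [c + 1..<c + e + 1]"
    unfolding rv by (simp add: removeAll_id)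
  have cL: "(c + e + 1) # ([c + e + 2..<c + k + 1] @ rev [c + 1..<c + e + 1]) = [c + e + 1..<c + k + 1] @ rev [c + 1..<c + e + 1]"
    using lt by (simp add: upt_conv_Cons)
  have fFs: "fF k ([c + e + 2..<c + k + 1] @ [c..<c + e + 1]) (c + e + 1) = [c + e + 1..<c + k + 1] @ [c..<c + e]"
    using ins by (simp add: fF_def)
  have fLs: "fL k ([c + e + 2..<c + k + 1] @ rev [c + 1..<c + e + 2]) (c + e + 1) = [c + e + 1..<c + k + 1] @ rev [c + 1..<c + e + 1]"
    using inL rm cL by (simp only: fL_def if_True)
  show ?case unfolding r fifo_append lru_append runF_append runL_append
    using IH fFs fLs ins(1) inL by simp
qed

definition cyc :: "nat \<Rightarrow> nat \<Rightarrow> page list" where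
  "cyc k c = [c + 1..<c + k] @ [c + k] @ rev [c + 1..<c + k]"

lemma cyc_run:
  assumes k: "1 \<le> k"
  shows "runF k [c..<c + k] (cyc k c) = [c + 1..<c + 1 + k]
       \<and> runL k [c..<c + k] (cyc k c) = [c + 1..<c + 1 + k]
       \<and> fifo_faults k [c..<c + k] (cyc k c) = k
       \<and> lru_faults k [c..<c + k] (cyc k c) = 1"
proof -
  have H: "runF k [c..<c + k] [c + 1..<c + k] = [c..<c + k]
       \<and> runL k [c..<c + k] [c + 1..<c + k] = rev [c..<c + k]
       \<and> fifo_faults k [c..<c + k] [c + 1..<c + k] = 0
       \<and> lru_faults k [c..<c + k] [c + 1..<c + k] = 0"
    using cyc_H[of "k - 1" 0 k c] k by simp
  have F1: "fF k [c..<c + k] (c + k) = (c + k) # [c..<c + k - 1]"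
    using k by (simp add: fF_def take_upt)
  have rv: "rev [c..<c + k] = rev [c + 1..<c + k] @ [c]" using k by (simp add: upt_conv_Cons)
  have L1: "fL k (rev [c..<c + k]) (c + k) = (c + k) # rev [c + 1..<c + k]"
    unfolding rv using k by (simp add: fL_def take_append)
  have S: "runF k ((c + k) # [c..<c + k - 1]) (rev [c + 1..<c + k]) = [c + 1..<c + k + 1]
       \<and> runL k ((c + k) # rev [c + 1..<c + k]) (rev [c + 1..<c + k]) = [c + 1..<c + k + 1]
       \<and> fifo_faults k ((c + k) # [c..<c + k - 1]) (rev [c + 1..<c + k]) = k - 1
       \<and> lru_faults k ((c + k) # rev [c + 1..<c + k]) (rev [c + 1..<c + k]) = 0"
    using cyc_S3[of "k - 1" 0 k c] k by simp
  have n1: "c + k \<notin> set [c..<c + k]" by simp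
  have n2: "c + k \<notin> set (rev [c..<c + k])" by simp
  show ?thesis unfolding cyc_def fifo_append lru_append runF_append runL_append
    using H F1 L1 S n1 n2 k by (simp add: add.commute add.left_commute)
qed

lemma length_cyc: "1 \<le> k \<Longrightarrow> length (cyc k c) = 2 * k - 1"
  by (simp add: cyc_def)

lemma length_cycles: "1 \<le> k \<Longrightarrow> length (concat (map (cyc k) [0..<m])) = (2 * k - 1) * m"
  by (induction m) (simp_all add: length_cyc)

lemma cycles_run0:
  assumes k: "1 \<le> k"
  shows "runF k [0..<k] (concat (map (cyc k) [0..<m])) = [m..<m + k]
       \<and> runL k [0..<k] (concat (map (cyc k) [0..<m])) = [m..<m + k]
       \<and> fifo_faults k [0..<k] (concat (map (cyc k) [0..<m])) = k * m
       \<and> lru_faults k [0..<k] (concat (map (cyc k) [0..<m])) = m"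
proof (induction m)
  case 0 then show ?case by simp
next
  case (Suc m)
  have e: "concat (map (cyc k) [0..<Suc m]) = concat (map (cyc k) [0..<m]) @ cyc k m" by simp
  have C: "runF k [m..<m + k] (cyc k m) = [m + 1..<m + 1 + k]
       \<and> runL k [m..<m + k] (cyc k m) = [m + 1..<m + 1 + k]
       \<and> fifo_faults k [m..<m + k] (cyc k m) = k
       \<and> lru_faults k [m..<m + k] (cyc k m) = 1" by (rule cyc_run[OF k])
  show ?case unfolding e fifo_append lru_append runF_append runL_append
    using Suc.IH C by (simp add: algebra_simps)
qed

lemma cycles_run:
  assumes k: "1 \<le> k"
  shows "runF k [0..<k] (concat (map (cyc k) [0..<m])) = [m..<m + k]
       \<and> runL k [0..<k] (concat (map (cyc k) [0..<m])) = [m..<m + k]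
       \<and> fifo_faults k [0..<k] (concat (map (cyc k) [0..<m])) = k * m
       \<and> lru_faults k [0..<k] (concat (map (cyc k) [0..<m])) = m
       \<and> length (concat (map (cyc k) [0..<m])) = (2 * k - 1) * m"
  using cycles_run0[OF k, of m] length_cycles[OF k, of m] by simp

definition maxseq :: "nat \<Rightarrow> nat \<Rightarrow> page list" where
  "maxseq k m = rev [0..<k] @ concat (map (cyc k) [0..<m])"

lemma maxseq_props:
  assumes k: "1 \<le> k"
  shows "FIFO k (maxseq k m) = k + k * m \<and> LRU k (maxseq k m) = k + m
       \<and> length (maxseq k m) = k + (2 * k - 1) * m"
  using warm_max[of k 0 k] cycles_run[OF k, of m]
  by (simp add: maxseq_def FIFO_def LRU_def fifo_append lru_append runF_append runL_append)

lemma warm_min1: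
  assumes "d \<le> k"
  shows "runF k [] [0..<d] = rev [0..<d] \<and> runL k [] [0..<d] = rev [0..<d]
       \<and> fifo_faults k [] [0..<d] = d \<and> lru_faults k [] [0..<d] = d"
  using assms
proof (induction d)
  case 0 then show ?case by simp
next
  case (Suc d)
  have t: "take (k - 1) (rev [0..<d]) = rev [0..<d]" using Suc.prems by simp
  show ?case unfolding upt_Suc_append[OF le0] fifo_append lru_append runF_append runL_append
    using Suc t by (simp add: fF_def fL_def)
qed

lemma warm_min2:
  assumes "d + e + 1 = k"
  shows "runL k (rev [0..<k]) (rev [e..<k - 1]) = [e..<k] @ rev [0..<e]
       \<and> lru_faults k (rev [0..<k]) (rev [e..<k - 1]) = 0"
  using assms
proof (induction d arbitrary: e)
  case 0
  hence e: "e = k - 1" "1 \<le> k" by auto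
  have "rev [0..<k] = [k - 1..<k] @ rev [0..<k - 1]"
  proof -
    have "[0..<k] = [0..<k - 1] @ [k - 1]" using e upt_Suc_append[of 0 "k - 1"] by simp
    moreover have "[k - 1..<k] = [k - 1]" using e by (simp add: upt_conv_Cons)
    ultimately show ?thesis by simp
  qed
  then show ?case using e by simp
next
  case (Suc d)
  have kk: "k = d + e + 2" using Suc.prems by simp
  have IH: "runL k (rev [0..<k]) (rev [e + 1..<k - 1]) = [e + 1..<k] @ rev [0..<e + 1]
       \<and> lru_faults k (rev [0..<k]) (rev [e + 1..<k - 1]) = 0"
    using Suc.IH[of "Suc e"] Suc.prems by simp
  have r: "rev [e..<k - 1] = rev [e + 1..<k - 1] @ [e]" using kk by (simp add: upt_conv_Cons)
  have inL: "e \<in> set ([e + 1..<k] @ rev [0..<e + 1])" by simp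
  have rm: "removeAll e ([e + 1..<k] @ rev [0..<e + 1]) = [e + 1..<k] @ rev [0..<e]"
    by (simp add: removeAll_id)
  have c: "e # ([e + 1..<k] @ rev [0..<e]) = [e..<k] @ rev [0..<e]" using kk by (simp add: upt_conv_Cons)
  show ?case unfolding r lru_append runL_append using IH inL rm c by (simp add: fL_def)
qed

lemma blk_inner:
  assumes "d + e + 1 = k"
  shows "runL k ((j + k) # [j..<j + k - 1]) (rev [j + e + 1..<j + k]) = [j + e + 1..<j + k + 1] @ [j..<j + e]
       \<and> lru_faults k ((j + k) # [j..<j + k - 1]) (rev [j + e + 1..<j + k]) = d"
  using assms
proof (induction d arbitrary: e)
  case 0
  hence e: "e = k - 1" "k \<ge> 1" by auto
  have "[j + k..<j + k + 1] = [j + k]" by simp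
  then show ?case using e by simp
next
  case (Suc d)
  let ?L0 = "(j + k) # [j..<j + k - 1]"
  have kk: "k = d + e + 2" using Suc.prems by simp
  have IH: "runL k ?L0 (rev [j + e + 2..<j + k]) = [j + e + 2..<j + k + 1] @ [j..<j + e + 1]
       \<and> lru_faults k ?L0 (rev [j + e + 2..<j + k]) = d"
    using Suc.IH[of "Suc e"] Suc.prems by (simp add: add.assoc)
  have lt: "j + e + 1 < j + k" using kk by simp
  have r: "rev [j + e + 1..<j + k] = rev [j + e + 2..<j + k] @ [j + e + 1]"
    using lt by (simp add: upt_conv_Cons)
  note ins = ins_step[OF kk, of j]
  have fLs: "fL k ([j + e + 2..<j + k + 1] @ [j..<j + e + 1]) (j + e + 1) = [j + e + 1..<j + k + 1] @ [j..<j + e]"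
    using ins by (simp add: fL_def)
  show ?case unfolding r lru_append runL_append
    using IH fLs ins(1) by simp
qed

definition blk :: "nat \<Rightarrow> nat \<Rightarrow> page list" where
  "blk k j = (j + k) # rev [j + 1..<j + k]"

lemma blk_run:
  assumes k: "1 \<le> k"
  shows "runF k (rev [j..<j + k]) (blk k j) = rev [j + 1..<j + 1 + k]
       \<and> runL k [j..<j + k] (blk k j) = [j + 1..<j + 1 + k]
       \<and> fifo_faults k (rev [j..<j + k]) (blk k j) = 1
       \<and> lru_faults k [j..<j + k] (blk k j) = k
       \<and> length (blk k j) = k"
proof -
  have rv: "rev [j..<j + k] = rev [j + 1..<j + k] @ [j]" using k by (simp add: upt_conv_Cons)
  have F1: "fF k (rev [j..<j + k]) (j + k) = rev [j + 1..<j + k + 1]"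
    unfolding rv using k by (simp add: fF_def take_append)
  have L1: "fL k [j..<j + k] (j + k) = (j + k) # [j..<j + k - 1]"
    using k by (simp add: fL_def take_upt)
  have I: "runL k ((j + k) # [j..<j + k - 1]) (rev [j + 1..<j + k]) = [j + 1..<j + k + 1]
       \<and> lru_faults k ((j + k) # [j..<j + k - 1]) (rev [j + 1..<j + k]) = k - 1"
    using blk_inner[of "k - 1" 0 k j] k by simp
  have Hh: "fifo_faults k (rev [j + 1..<j + k + 1]) (rev [j + 1..<j + k]) = 0
       \<and> runF k (rev [j + 1..<j + k + 1]) (rev [j + 1..<j + k]) = rev [j + 1..<j + k + 1]"
    by (rule fifo_hits) auto
  have n1: "j + k \<notin> set (rev [j..<j + k])" by simp
  have n2: "j + k \<notin> set [j..<j + k]" by simp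
  have e: "blk k j = [j + k] @ rev [j + 1..<j + k]" by (simp add: blk_def)
  show ?thesis unfolding e fifo_append lru_append runF_append runL_append
    using F1 L1 I Hh n1 n2 k by (simp add: add.commute add.left_commute)
qed

lemma blocks_run:
  assumes k: "1 \<le> k"
  shows "runF k (rev [0..<k]) (concat (map (blk k) [0..<m])) = rev [m..<m + k]
       \<and> runL k [0..<k] (concat (map (blk k) [0..<m])) = [m..<m + k]
       \<and> fifo_faults k (rev [0..<k]) (concat (map (blk k) [0..<m])) = m
       \<and> lru_faults k [0..<k] (concat (map (blk k) [0..<m])) = k * m
       \<and> length (concat (map (blk k) [0..<m])) = k * m"
proof (induction m)
  case 0 then show ?case by simp
next
  case (Suc m)
  have e: "concat (map (blk k) [0..<Suc m]) = concat (map (blk k) [0..<m]) @ blk k m" by simp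
  have C: "runF k (rev [m..<m + k]) (blk k m) = rev [m + 1..<m + 1 + k]
       \<and> runL k [m..<m + k] (blk k m) = [m + 1..<m + 1 + k]
       \<and> fifo_faults k (rev [m..<m + k]) (blk k m) = 1
       \<and> lru_faults k [m..<m + k] (blk k m) = k
       \<and> length (blk k m) = k" by (rule blk_run[OF k])
  show ?case unfolding e fifo_append lru_append runF_append runL_append
    using Suc.IH C by (simp add: algebra_simps)
qed

definition minseq :: "nat \<Rightarrow> nat \<Rightarrow> page list" where
  "minseq k m = [0..<k] @ rev [0..<k - 1] @ concat (map (blk k) [0..<m])"

lemma minseq_props:
  assumes k: "1 \<le> k"
  shows "FIFO k (minseq k m) = k + m \<and> LRU k (minseq k m) = k + k * m
       \<and> length (minseq k m) = (2 * k - 1) + k * m"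
proof -
  have W1: "runF k [] [0..<k] = rev [0..<k] \<and> runL k [] [0..<k] = rev [0..<k]
       \<and> fifo_faults k [] [0..<k] = k \<and> lru_faults k [] [0..<k] = k"
    using warm_min1[of k k] by simp
  have W2: "runL k (rev [0..<k]) (rev [0..<k - 1]) = [0..<k]
       \<and> lru_faults k (rev [0..<k]) (rev [0..<k - 1]) = 0"
    using warm_min2[of "k - 1" 0 k] k by simp
  have W2F: "fifo_faults k (rev [0..<k]) (rev [0..<k - 1]) = 0
       \<and> runF k (rev [0..<k]) (rev [0..<k - 1]) = rev [0..<k]"
    by (rule fifo_hits) auto
  show ?thesis using W1 W2 W2F blocks_run[OF k, of m] k
    by (simp add: minseq_def FIFO_def LRU_def fifo_append lru_append runF_append runL_append)
qed

lemma lim_ratio: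
  assumes C: "C > 0"
  shows "((\<lambda>m::nat. A * real m / (B + C * real m)) \<longlongrightarrow> A / C) sequentially"
proof -
  have z: "((\<lambda>m::nat. B / real m) \<longlongrightarrow> 0) sequentially"
    by (rule tendsto_divide_0[OF tendsto_const filterlim_at_top_imp_at_infinity[OF filterlim_real_sequentially]])
  have "((\<lambda>m::nat. A / (B / real m + C)) \<longlongrightarrow> A / (0 + C)) sequentially"
    by (intro tendsto_intros z) (use C in auto)
  hence t: "((\<lambda>m::nat. A / (B / real m + C)) \<longlongrightarrow> A / C) sequentially" by simp
  have "eventually (\<lambda>m::nat. A / (B / real m + C) = A * real m / (B + C * real m)) sequentially"
    using eventually_ge_at_top[of "1::nat"]
  proof eventually_elim
    case (elim m)
    hence m: "real m > 0" by simp
    have "B / real m + C = (B + C * real m) / real m" using m by (simp add: field_simps)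
    thus ?case using m by (simp add: field_simps)
  qed
  thus ?thesis using t by (rule Lim_transform_eventually[rotated])
qed

definition Sset :: "nat \<Rightarrow> nat \<Rightarrow> int set" where
  "Sset k n = {int (FIFO k I) - int (LRU k I) | I. length I = n}"

lemma Sset_finite: "finite (Sset k n)"
proof -
  have "x \<in> {- int n .. int n}" if "x \<in> Sset k n" for x
  proof -
    from that obtain I where I: "length I = n" "x = int (FIFO k I) - int (LRU k I)"
      unfolding Sset_def by auto
    have "FIFO k I \<le> n" using fifo_le[of k "[]" I] I(1) unfolding FIFO_def by simp
    moreover have "LRU k I \<le> n" using lru_le[of k "[]" I] I(1) unfolding LRU_def by simp
    ultimately show ?thesis using I(2) by simp
  qed
  hence "Sset k n \<subseteq> {- int n .. int n}" by blast
  thus ?thesis by (rule finite_subset) simp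
qed

lemma Sset_ne: "Sset k n \<noteq> {}"
  unfolding Sset_def by (rule, simp) (metis length_replicate)

lemma MaxAB_eq: "MaxAB (FIFO k) (LRU k) n = Max (Sset k n)"
  by (simp add: MaxAB_def Sset_def)
lemma MinAB_eq: "MinAB (FIFO k) (LRU k) n = Min (Sset k n)"
  by (simp add: MinAB_def Sset_def)

lemma MaxAB_upper:
  assumes k: "1 \<le> k"
  shows "(2 * int k - 1) * MaxAB (FIFO k) (LRU k) n \<le> (int k - 1) * int n"
proof -
  have "Max (Sset k n) \<in> Sset k n" using Sset_finite Sset_ne by (rule Max_in)
  then obtain I where "length I = n" "Max (Sset k n) = int (FIFO k I) - int (LRU k I)"
    unfolding Sset_def by auto
  thus ?thesis using upper_bound[OF k, of I] by (simp add: MaxAB_eq)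
qed

lemma MinAB_lower:
  assumes k: "1 \<le> k"
  shows "- ((int k - 1) * int n) \<le> int k * MinAB (FIFO k) (LRU k) n"
proof -
  have "Min (Sset k n) \<in> Sset k n" using Sset_finite Sset_ne by (rule Min_in)
  then obtain I where "length I = n" and eq: "Min (Sset k n) = int (FIFO k I) - int (LRU k I)"
    unfolding Sset_def by auto
  have "int k * Min (Sset k n) = - (int k * (int (LRU k I) - int (FIFO k I)))"
    unfolding eq by (simp add: algebra_simps)
  thus ?thesis using lower_bound[OF k, of I] \<open>length I = n\<close> by (simp add: MinAB_eq)
qed

lemma MaxAB_ge: "length I = n \<Longrightarrow> int (FIFO k I) - int (LRU k I) \<le> MaxAB (FIFO k) (LRU k) n"
  unfolding MaxAB_eq using Sset_finite by (rule Max_ge) (auto simp: Sset_def)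

lemma MinAB_le: "length I = n \<Longrightarrow> MinAB (FIFO k) (LRU k) n \<le> int (FIFO k I) - int (LRU k I)"
  unfolding MinAB_eq using Sset_finite by (rule Min_le) (auto simp: Sset_def)

lemma MaxRel_val:
  assumes k: "1 \<le> k"
  shows "MaxRel (FIFO k) (LRU k) = ereal ((real k - 1) / (2 * real k - 1))"
proof -
  define c where "c = (real k - 1) / (2 * real k - 1)"
  define X where "X = (\<lambda>n. ereal (real_of_int (MaxAB (FIFO k) (LRU k) n) / real n))"
  have kr: "1 \<le> real k" using k by simp
  have pos: "2 * real k - 1 > 0" using kr by simp
  have le: "X n \<le> ereal c" for n
  proof (cases "n = 0")
    case True
    hence "X n = 0" by (simp add: X_def)
    moreover have "0 \<le> c" using kr pos by (simp add: c_def)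
    ultimately show ?thesis by simp
  next
    case False
    hence n: "real n > 0" by simp
    have "(2 * real k - 1) * real_of_int (MaxAB (FIFO k) (LRU k) n) \<le> (real k - 1) * real n"
    proof -
      have "real_of_int ((2 * int k - 1) * MaxAB (FIFO k) (LRU k) n) \<le> real_of_int ((int k - 1) * int n)"
        using MaxAB_upper[OF k, of n] by (simp only: of_int_le_iff)
      thus ?thesis by simp
    qed
    hence "real_of_int (MaxAB (FIFO k) (LRU k) n) / real n \<le> c"
      using n pos by (simp add: c_def field_simps mult.commute)
    thus ?thesis by (simp add: X_def)
  qed
  have up: "limsup X \<le> ereal c"
    by (rule Limsup_bounded) (simp add: le)
  define r where "r = (\<lambda>m::nat. k + (2 * k - 1) * m)"
  have sm: "strict_mono r" unfolding r_def using k by (intro strict_monoI) simp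
  define h where "h = (\<lambda>m::nat. (real k - 1) * real m / (real k + (2 * real k - 1) * real m))"
  have hX: "ereal (h m) \<le> (X \<circ> r) m" for m
  proof -
    have P: "FIFO k (maxseq k m) = k + k * m \<and> LRU k (maxseq k m) = k + m
       \<and> length (maxseq k m) = k + (2 * k - 1) * m" by (rule maxseq_props[OF k])
    have "int (FIFO k (maxseq k m)) - int (LRU k (maxseq k m)) \<le> MaxAB (FIFO k) (LRU k) (r m)"
      by (rule MaxAB_ge) (simp add: P r_def)
    hence a: "(int k - 1) * int m \<le> MaxAB (FIFO k) (LRU k) (r m)"
      using P by (simp add: algebra_simps)
    have rr: "real (r m) = real k + (2 * real k - 1) * real m"
      using k by (simp add: r_def of_nat_diff)
    have "r m > 0" unfolding r_def using k by simp
    hence rpos: "real (r m) > 0" by simp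
    have "(real k - 1) * real m \<le> real_of_int (MaxAB (FIFO k) (LRU k) (r m))"
    proof -
      have "real_of_int ((int k - 1) * int m) \<le> real_of_int (MaxAB (FIFO k) (LRU k) (r m))"
        using a by (simp only: of_int_le_iff)
      thus ?thesis by simp
    qed
    hence "h m \<le> real_of_int (MaxAB (FIFO k) (LRU k) (r m)) / real (r m)"
      unfolding h_def rr[symmetric] using rpos by (simp add: divide_right_mono)
    thus ?thesis by (simp add: X_def)
  qed
  have th: "((\<lambda>m. ereal (h m)) \<longlongrightarrow> ereal c) sequentially"
    unfolding h_def c_def by (intro tendsto_ereal lim_ratio pos)
  have "ereal c = limsup (\<lambda>m. ereal (h m))"
    using lim_imp_Limsup[OF trivial_limit_sequentially th] by simp
  also have "\<dots> \<le> limsup (X \<circ> r)" by (rule Limsup_mono, rule always_eventually) (use hX in \<open>simp add: o_def\<close>)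
  also have "\<dots> \<le> limsup X" by (rule limsup_subseq_mono[OF sm])
  finally show ?thesis using up unfolding MaxRel_def X_def[symmetric] c_def by simp
qed

lemma MinRel_val:
  assumes k: "1 \<le> k"
  shows "MinRel (FIFO k) (LRU k) = ereal (- (real k - 1) / real k)"
proof -
  define c where "c = - (real k - 1) / real k"
  define X where "X = (\<lambda>n. ereal (real_of_int (MinAB (FIFO k) (LRU k) n) / real n))"
  have kr: "1 \<le> real k" using k by simp
  have pos: "real k > 0" using kr by simp
  have ge: "ereal c \<le> X n" for n
  proof (cases "n = 0")
    case True
    hence "X n = 0" by (simp add: X_def)
    moreover have "c \<le> 0" unfolding c_def using kr by (intro divide_nonpos_pos) auto
    ultimately show ?thesis by simp
  next
    case False
    hence n: "real n > 0" by simp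
    have "- ((real k - 1) * real n) \<le> real k * real_of_int (MinAB (FIFO k) (LRU k) n)"
    proof -
      have "real_of_int (- ((int k - 1) * int n)) \<le> real_of_int (int k * MinAB (FIFO k) (LRU k) n)"
        using MinAB_lower[OF k, of n] by (simp only: of_int_le_iff)
      thus ?thesis by simp
    qed
    hence "c \<le> real_of_int (MinAB (FIFO k) (LRU k) n) / real n"
      using n pos by (simp add: c_def field_simps mult.commute)
    thus ?thesis by (simp add: X_def)
  qed
  have lo: "ereal c \<le> liminf X"
    by (rule Liminf_bounded) (simp add: ge)
  define r where "r = (\<lambda>m::nat. (2 * k - 1) + k * m)"
  have sm: "strict_mono r"
  proof (rule strict_monoI)
    fix x y :: nat assume "x < y"
    hence "k * x < k * y" using k by simp
    thus "r x < r y" unfolding r_def by linarith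
  qed
  define h where "h = (\<lambda>m::nat. (- (real k - 1)) * real m / ((2 * real k - 1) + real k * real m))"
  have hX: "(X \<circ> r) m \<le> ereal (h m)" for m
  proof -
    have P: "FIFO k (minseq k m) = k + m \<and> LRU k (minseq k m) = k + k * m
       \<and> length (minseq k m) = (2 * k - 1) + k * m" by (rule minseq_props[OF k])
    have "MinAB (FIFO k) (LRU k) (r m) \<le> int (FIFO k (minseq k m)) - int (LRU k (minseq k m))"
      by (rule MinAB_le) (simp add: P r_def)
    hence a: "MinAB (FIFO k) (LRU k) (r m) \<le> - ((int k - 1) * int m)"
      using P by (simp add: algebra_simps)
    have rr: "real (r m) = (2 * real k - 1) + real k * real m"
      using k by (simp add: r_def of_nat_diff)
    have "r m > 0" unfolding r_def using k by simp
    hence rpos: "real (r m) > 0" by simp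
    have "real_of_int (MinAB (FIFO k) (LRU k) (r m)) \<le> (- (real k - 1)) * real m"
    proof -
      have "real_of_int (MinAB (FIFO k) (LRU k) (r m)) \<le> real_of_int (- ((int k - 1) * int m))"
        using a by (simp only: of_int_le_iff)
      thus ?thesis by (simp add: algebra_simps)
    qed
    hence "real_of_int (MinAB (FIFO k) (LRU k) (r m)) / real (r m) \<le> h m"
      unfolding h_def rr[symmetric] using rpos by (simp add: divide_right_mono)
    thus ?thesis by (simp add: X_def)
  qed
  have th: "((\<lambda>m. ereal (h m)) \<longlongrightarrow> ereal c) sequentially"
    unfolding h_def c_def by (intro tendsto_ereal lim_ratio pos)
  have "liminf X \<le> liminf (X \<circ> r)" by (rule liminf_subseq_mono[OF sm])
  also have "\<dots> \<le> liminf (\<lambda>m. ereal (h m))" by (rule Liminf_mono, rule always_eventually) (use hX in \<open>simp add: o_def\<close>)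
  also have "\<dots> = ereal c"
    using lim_imp_Liminf[OF trivial_limit_sequentially th] by simp
  finally show ?thesis using lo unfolding MinRel_def X_def[symmetric] c_def by simp
qed

theorem theorem1:
  fixes k :: nat
  assumes "k \<ge> 1"
  shows "rel_interval (FIFO k) (LRU k) =
           (ereal (-1 + 1 / real k), ereal (1/2 - 1 / (4 * real k - 2)))"
proof -
  have kr: "1 \<le> real k" using assms by simp
  have e1: "- (real k - 1) / real k = -1 + 1 / real k" using kr by (simp add: field_simps)
  have d: "4 * real k - 2 = 2 * (2 * real k - 1)" by simp
  have e2: "(real k - 1) / (2 * real k - 1) = 1/2 - 1 / (4 * real k - 2)"
    unfolding d using kr by (simp add: field_simps)
  show ?thesis unfolding rel_interval_def
    using MinRel_val[OF assms] MaxRel_val[OF assms] e1 e2 by simp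
qed

end
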